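(* Let $p\ge 1$, $n_1,\dots,n_p\ge 1$, $n=n_1+\dots+n_p$, and let $A\in\mathcal{B}'(p)$ (defined in the context), with diagonal blocks $A_{k,k}$ ($k=1,\dots,p$). Then: (1) $A\succeq 0$ if and only if $\phi(A)\succeq 0$ and $A_{k,k}\succeq 0$ for every $k\in\{1,\dots,p\}$. (2) $A\succ 0$ if and only if $\phi(A)\succ 0$ and $A_{k,k}\succ 0$ for every $k\in\{1,\dots,p\}$.
   Context: All matrices are real. $M\succeq 0$ means $M$ is symmetric positive semidefinite, $M\succ 0$ means symmetric positive definite. $J_{m}$ is the $m\times m$ matrix of ones and $J_{m,q}=\mathbf 1_m\mathbf 1_q^\top$ the $m\times q$ matrix of ones. For a square matrix $C$ of size $m$, $\overline{C}=m^{-2}\mathbf 1_m^\top C\mathbf 1_m$ denotes the average of its entries. Given block sizes $n_1,\dots,n_p$, index the rows/columns of an $n\times n$ matrix ($n=\sum n_k$) by groups $G_1,\dots,G_p$, where $G_1$ consists of the first $n_1$ indices, $G_2$ the next $n_2$, etc., and write the matrix in block form $A=(A_{k,\ell})_{1\le k,\ell\le p}$ with $A_{k,\ell}$ of size $n_k\times n_\ell$. $\mathcal{B}'(p)$ is the set of real symmetric $n\times n$ block matrices $A$ such that every off-diagonal block is constant, i.e. $A_{k,\ell}=c_{k,\ell}J_{n_k,n_\ell}$ for some real $c_{k,\ell}$ ($k\neq\ell$), and every diagonal block satisfies $A_{k,k}-\overline{A_{k,k}}\,J_{n_k}\succeq 0$. The block average map $\phi$ sends $A$ to the $p\times p$ matrix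 $[\phi(A)]_{k,\ell}=\frac{1}{n_kn_\ell}\sum_{i\in G_k,\,j\in G_\ell}A_{i,j}$. *)

theory Defs
  imports "Jordan_Normal_Form.Matrix"
begin

definition psd :: "real mat \<Rightarrow> bool" where
  "psd M \<longleftrightarrow> M \<in> carrier_mat (dim_row M) (dim_row M) \<and> transpose_mat M = M \<and>
     (\<forall>v \<in> carrier_vec (dim_row M). v \<bullet> (M *\<^sub>v v) \<ge> 0)"

definition pd :: "real mat \<Rightarrow> bool" where
  "pd M \<longleftrightarrow> M \<in> carrier_mat (dim_row M) (dim_row M) \<and> transpose_mat M = M \<and>
     (\<forall>v \<in> carrier_vec (dim_row M). v \<noteq> 0\<^sub>v (dim_row M) \<longrightarrow> v \<bullet> (M *\<^sub>v v) > 0)"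

definition ones_mat :: "nat \<Rightarrow> nat \<Rightarrow> real mat" where
  "ones_mat m q = mat m q (\<lambda>_. 1)"

definition mat_avg :: "real mat \<Rightarrow> real" where
  "mat_avg C = (\<Sum>i<dim_row C. \<Sum>j<dim_row C. C $$ (i, j)) / (real (dim_row C))^2"

(* block sizes ns = [n_1,...,n_p]; group G_k (0-based k) starts at offset
   n_1 + ... + n_k *)
definition blk_off :: "nat list \<Rightarrow> nat \<Rightarrow> nat" where
  "blk_off ns k = sum_list (take k ns)"

definition blk :: "nat list \<Rightarrow> real mat \<Rightarrow> nat \<Rightarrow> nat \<Rightarrow> real mat" where
  "blk ns A k l = mat (ns ! k) (ns ! l) (\<lambda>(i, j). A $$ (blk_off ns k + i, blk_off ns l + j))"

definition phi :: "nat list \<Rightarrow> real mat \<Rightarrow> real mat" where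
  "phi ns A = mat (length ns) (length ns) (\<lambda>(k, l).
     (\<Sum>i<ns ! k. \<Sum>j<ns ! l. A $$ (blk_off ns k + i, blk_off ns l + j)) / (real (ns ! k) * real (ns ! l)))"

definition Bprime :: "nat list \<Rightarrow> real mat \<Rightarrow> bool" where
  "Bprime ns A \<longleftrightarrow> A \<in> carrier_mat (sum_list ns) (sum_list ns) \<and> transpose_mat A = A \<and>
     (\<forall>k < length ns. \<forall>l < length ns. k \<noteq> l \<longrightarrow>
        (\<exists>c. blk ns A k l = c \<cdot>\<^sub>m ones_mat (ns ! k) (ns ! l))) \<and>
     (\<forall>k < length ns. psd (blk ns A k k - mat_avg (blk ns A k k) \<cdot>\<^sub>m ones_mat (ns ! k) (ns ! k)))"

end

theory Submission imports Defs begin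

lemma quad_sum:
  assumes "v \<in> carrier_vec m" "M \<in> carrier_mat m m"
  shows "v \<bullet> (M *\<^sub>v v) = (\<Sum>i<m. \<Sum>j<m. v$i * M$$(i,j) * v$j)"
  using assms by (auto simp: scalar_prod_def row_def sum_distrib_left atLeast0LessThan mult.assoc intro!: sum.cong)

lemma psd_quad:
  assumes "psd M" "dim_row M = m"
  shows "(\<Sum>i<m. \<Sum>j<m. h i * M$$(i,j) * h j) \<ge> 0"
proof -
  have "vec m h \<bullet> (M *\<^sub>v vec m h) \<ge> 0" using assms unfolding psd_def by auto
  moreover have "vec m h \<bullet> (M *\<^sub>v vec m h) = (\<Sum>i<m. \<Sum>j<m. h i * M$$(i,j) * h j)"
    using assms unfolding psd_def by (subst quad_sum[of _ m]) auto
  ultimately show ?thesis by simp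
qed

lemma pd_quad:
  assumes "pd M" "dim_row M = m" "i0 < m" "h i0 \<noteq> 0"
  shows "(\<Sum>i<m. \<Sum>j<m. h i * M$$(i,j) * h j) > 0"
proof -
  have "vec m h \<noteq> 0\<^sub>v m" using assms by (metis index_vec index_zero_vec(1))
  then have "vec m h \<bullet> (M *\<^sub>v vec m h) > 0" using assms unfolding pd_def by auto
  moreover have "vec m h \<bullet> (M *\<^sub>v vec m h) = (\<Sum>i<m. \<Sum>j<m. h i * M$$(i,j) * h j)"
    using assms unfolding pd_def by (subst quad_sum[of _ m]) auto
  ultimately show ?thesis by simp
qed

lemma sym_intro:
  assumes "M \<in> carrier_mat m m" "\<And>i j. i < m \<Longrightarrow> j < m \<Longrightarrow> M$$(i,j) = M$$(j,i)"
  shows "transpose_mat M = M"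
  using assms by (intro eq_matI) auto

lemma psd_intro:
  assumes "M \<in> carrier_mat m m" "\<And>i j. i < m \<Longrightarrow> j < m \<Longrightarrow> M$$(i,j) = M$$(j,i)"
    "\<And>h. (\<Sum>i<m. \<Sum>j<m. h i * M$$(i,j) * h j) \<ge> 0"
  shows "psd M"
  unfolding psd_def
proof (intro conjI ballI)
  show "M \<in> carrier_mat (dim_row M) (dim_row M)" using assms by auto
  show "transpose_mat M = M" using sym_intro assms by blast
  fix v :: "real vec" assume "v \<in> carrier_vec (dim_row M)"
  then show "v \<bullet> (M *\<^sub>v v) \<ge> 0" using assms(1) assms(3)[of "\<lambda>i. v$i"] by (subst quad_sum[of _ m]) auto
qed

lemma pd_intro:
  assumes "M \<in> carrier_mat m m" "\<And>i j. i < m \<Longrightarrow> j < m \<Longrightarrow> M$$(i,j) = M$$(j,i)"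
    "\<And>h i0. i0 < m \<Longrightarrow> h i0 \<noteq> 0 \<Longrightarrow> (\<Sum>i<m. \<Sum>j<m. h i * M$$(i,j) * h j) > 0"
  shows "pd M"
  unfolding pd_def
proof (intro conjI ballI impI)
  show "M \<in> carrier_mat (dim_row M) (dim_row M)" using assms by auto
  show "transpose_mat M = M" using sym_intro assms by blast
  fix v :: "real vec" assume v: "v \<in> carrier_vec (dim_row M)" "v \<noteq> 0\<^sub>v (dim_row M)"
  then obtain i0 where "i0 < m" "v $ i0 \<noteq> 0" using assms(1) by (metis carrier_matD(1) carrier_vecD eq_vecI index_zero_vec)
  then show "v \<bullet> (M *\<^sub>v v) > 0" using v assms(1) assms(3)[of i0 "\<lambda>i. v$i"] by (subst quad_sum[of _ m]) auto
qed

lemma off_Suc: "k < length ns \<Longrightarrow> blk_off ns (Suc k) = blk_off ns k + ns!k"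
  by (simp add: blk_off_def take_Suc_conv_app_nth)

lemma off_mono: "k \<le> l \<Longrightarrow> blk_off ns k \<le> blk_off ns l"
proof -
  assume "k \<le> l"
  then have "take l ns = take k ns @ take (l-k) (drop k ns)" by (metis le_add_diff_inverse take_add)
  then show ?thesis by (simp add: blk_off_def)
qed

lemma off_len: "blk_off ns (length ns) = sum_list ns" by (simp add: blk_off_def)

lemma off_bound: "k < length ns \<Longrightarrow> a < ns!k \<Longrightarrow> blk_off ns k + a < sum_list ns"
  using off_Suc[of k ns] off_mono[of "Suc k" "length ns" ns] off_len[of ns] by linarith

lemma off_inj: assumes "k < length ns" "l < length ns" "a < ns!k" "b < ns!l"
  "blk_off ns k + a = blk_off ns l + b" shows "k = l \<and> a = b"
proof -
  have "\<not> k < l" using off_Suc[of k ns] off_mono[of "Suc k" l ns] assms by linarith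
  moreover have "\<not> l < k" using off_Suc[of l ns] off_mono[of "Suc l" k ns] assms by linarith
  ultimately show ?thesis using assms by auto
qed

lemma sum_lt_add: "(\<Sum>i<a+m. f i) = (\<Sum>i<a. f i) + (\<Sum>j<m. f (a + j :: nat))"
  by (induct m) (auto simp: add.assoc)

lemma reindex: "(\<Sum>i<sum_list ns. f i) = (\<Sum>k<length ns. \<Sum>a<ns!k. f (blk_off ns k + a))"
proof (induct ns rule: rev_induct)
  case Nil then show ?case by simp
next
  case (snoc m ns)
  have e: "(\<Sum>k<length ns. \<Sum>a<(ns@[m])!k. f (blk_off (ns@[m]) k + a))
         = (\<Sum>k<length ns. \<Sum>a<ns!k. f (blk_off ns k + a))"
    by (intro sum.cong) (auto simp: nth_append blk_off_def)
  have o: "blk_off (ns@[m]) (length ns) = sum_list ns" by (simp add: blk_off_def)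
  show ?case using snoc e o by (simp add: sum_lt_add)
qed


definition Bk :: "nat list \<Rightarrow> real mat \<Rightarrow> nat \<Rightarrow> real mat" where
  "Bk ns A k = blk ns A k k - mat_avg (blk ns A k k) \<cdot>\<^sub>m ones_mat (ns ! k) (ns ! k)"

lemma blk_entry: "a < ns!k \<Longrightarrow> b < ns!l \<Longrightarrow> blk ns A k l $$ (a,b) = A $$ (blk_off ns k + a, blk_off ns l + b)"
  by (simp add: blk_def)

lemma phi_entry: "k < length ns \<Longrightarrow> l < length ns \<Longrightarrow> phi ns A $$ (k,l) =
  (\<Sum>i<ns!k. \<Sum>j<ns!l. A $$ (blk_off ns k + i, blk_off ns l + j)) / (real (ns!k) * real (ns!l))"
  by (simp add: phi_def)

lemma avg_phi: "k < length ns \<Longrightarrow> mat_avg (blk ns A k k) = phi ns A $$ (k,k)"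
  by (simp add: mat_avg_def phi_entry blk_def power2_eq_square)

lemma Bk_dim: "dim_row (Bk ns A k) = ns!k" "dim_col (Bk ns A k) = ns!k"
  by (auto simp: Bk_def ones_mat_def)

lemma Bk_entry: "k < length ns \<Longrightarrow> a < ns!k \<Longrightarrow> b < ns!k \<Longrightarrow>
  Bk ns A k $$ (a,b) = A $$ (blk_off ns k + a, blk_off ns k + b) - phi ns A $$ (k,k)"
  unfolding Bk_def by (subst avg_phi, simp) (simp add: ones_mat_def blk_def)

lemma entry:
  assumes B: "Bprime ns A" and pos: "\<forall>k < length ns. ns ! k \<ge> 1"
    and kl: "k < length ns" "l < length ns" "a < ns!k" "b < ns!l"
  shows "A $$ (blk_off ns k + a, blk_off ns l + b) = phi ns A $$ (k,l) + (if k = l then Bk ns A k $$ (a,b) else 0)"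
proof (cases "k = l")
  case True then show ?thesis using kl by (simp add: Bk_entry)
next
  case False
  then obtain c where c: "blk ns A k l = c \<cdot>\<^sub>m ones_mat (ns ! k) (ns ! l)" using B kl unfolding Bprime_def by blast
  have ce: "A $$ (blk_off ns k + i, blk_off ns l + j) = c" if "i < ns!k" "j < ns!l" for i j
  proof -
    have "blk ns A k l $$ (i,j) = c" using c that by (simp add: ones_mat_def)
    then show ?thesis using blk_entry that by metis
  qed
  have "phi ns A $$ (k,l) = (\<Sum>i<ns!k. \<Sum>j<ns!l. c) / (real (ns!k) * real (ns!l))"
    using kl by (simp add: phi_entry ce)
  also have "\<dots> = c" using pos kl by simp
  finally show ?thesis using False ce kl by simp
qed

lemma delta2: "k < p \<Longrightarrow> (\<Sum>l<p. \<Sum>b<(f::nat\<Rightarrow>nat) l. if k = l then F l b else (0::real)) = (\<Sum>b<f k. F k b)"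
proof -
  assume "k < p"
  have "(\<Sum>l<p. \<Sum>b<f l. if k = l then F l b else (0::real)) = (\<Sum>l<p. if k = l then (\<Sum>b<f l. F l b) else 0)"
    by (intro sum.cong) auto
  also have "\<dots> = (\<Sum>b<f k. F k b)" using \<open>k < p\<close> by simp
  finally show ?thesis .
qed

lemma Qid:
  assumes B: "Bprime ns A" and pos: "\<forall>k < length ns. ns ! k \<ge> 1"
  shows "(\<Sum>i<sum_list ns. \<Sum>j<sum_list ns. w i * A$$(i,j) * w j) =
    (\<Sum>k<length ns. \<Sum>l<length ns. (\<Sum>a<ns!k. w (blk_off ns k + a)) * phi ns A $$ (k,l) * (\<Sum>b<ns!l. w (blk_off ns l + b)))
  + (\<Sum>k<length ns. \<Sum>a<ns!k. \<Sum>b<ns!k. w (blk_off ns k + a) * Bk ns A k $$ (a,b) * w (blk_off ns k + b))"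
  (is "?L = ?P + ?Q")
proof -
  let ?g = "\<lambda>k a. w (blk_off ns k + a)"
  have ent: "\<And>k a l b. k < length ns \<Longrightarrow> a < ns!k \<Longrightarrow> l < length ns \<Longrightarrow> b < ns!l \<Longrightarrow>
     ?g k a * A $$ (blk_off ns k + a, blk_off ns l + b) * ?g l b = ?g k a * phi ns A $$ (k,l) * ?g l b
       + (if k = l then ?g k a * Bk ns A k $$ (a,b) * ?g k b else 0)"
    by (subst entry[OF B pos]) (auto simp: algebra_simps)
  have "?L = (\<Sum>k<length ns. \<Sum>a<ns!k. \<Sum>l<length ns. \<Sum>b<ns!l. ?g k a * A $$ (blk_off ns k + a, blk_off ns l + b) * ?g l b)"
    by (simp only: reindex)
  also have "\<dots> = (\<Sum>k<length ns. \<Sum>a<ns!k. \<Sum>l<length ns. \<Sum>b<ns!l. ?g k a * phi ns A $$ (k,l) * ?g l b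
       + (if k = l then ?g k a * Bk ns A k $$ (a,b) * ?g k b else 0))"
    by (intro sum.cong refl) (simp add: ent)
  also have "\<dots> = (\<Sum>k<length ns. \<Sum>a<ns!k. \<Sum>l<length ns. \<Sum>b<ns!l. ?g k a * phi ns A $$ (k,l) * ?g l b)
     + (\<Sum>k<length ns. \<Sum>a<ns!k. \<Sum>l<length ns. \<Sum>b<ns!l. (if k = l then ?g k a * Bk ns A k $$ (a,b) * ?g k b else 0))"
    by (simp only: sum.distrib)
  also have "(\<Sum>k<length ns. \<Sum>a<ns!k. \<Sum>l<length ns. \<Sum>b<ns!l. ?g k a * phi ns A $$ (k,l) * ?g l b) = ?P"
  proof (rule sum.cong[OF refl])
    fix k assume "k \<in> {..<length ns}"
    have "(\<Sum>a<ns!k. \<Sum>l<length ns. \<Sum>b<ns!l. ?g k a * phi ns A $$ (k,l) * ?g l b)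
        = (\<Sum>l<length ns. \<Sum>a<ns!k. \<Sum>b<ns!l. ?g k a * phi ns A $$ (k,l) * ?g l b)"
      by (rule sum.swap)
    also have "\<dots> = (\<Sum>l<length ns. (\<Sum>a<ns!k. ?g k a) * phi ns A $$ (k,l) * (\<Sum>b<ns!l. ?g l b))"
      by (simp only: sum_distrib_left sum_distrib_right mult.assoc) (rule sum.cong[OF refl], rule sum.swap)
    finally show "(\<Sum>a<ns!k. \<Sum>l<length ns. \<Sum>b<ns!l. ?g k a * phi ns A $$ (k,l) * ?g l b)
      = (\<Sum>l<length ns. (\<Sum>a<ns!k. ?g k a) * phi ns A $$ (k,l) * (\<Sum>b<ns!l. ?g l b))" .
  qed
  also have "(\<Sum>k<length ns. \<Sum>a<ns!k. \<Sum>l<length ns. \<Sum>b<ns!l. (if k = l then ?g k a * Bk ns A k $$ (a,b) * ?g k b else 0)) = ?Q"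
    by (rule sum.cong[OF refl], rule sum.cong[OF refl]) (simp add: delta2)
  finally show ?thesis .
qed


lemma A_sym: assumes "Bprime ns A" "i < sum_list ns" "j < sum_list ns" shows "A $$ (i,j) = A $$ (j,i)"
proof -
  have "A \<in> carrier_mat (sum_list ns) (sum_list ns)" "transpose_mat A = A" using assms unfolding Bprime_def by auto
  then show ?thesis using assms by (metis carrier_matD index_transpose_mat(1))
qed

lemma phi_sym: assumes "Bprime ns A" "k < length ns" "l < length ns"
  shows "phi ns A $$ (k,l) = phi ns A $$ (l,k)"
proof -
  have "(\<Sum>i<ns!k. \<Sum>j<ns!l. A $$ (blk_off ns k + i, blk_off ns l + j))
      = (\<Sum>j<ns!l. \<Sum>i<ns!k. A $$ (blk_off ns l + j, blk_off ns k + i))"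
    by (subst sum.swap) (intro sum.cong refl A_sym[OF assms(1)] off_bound; use assms in auto)
  then show ?thesis using assms by (simp add: phi_entry mult.commute)
qed

lemma phi_carrier: "phi ns A \<in> carrier_mat (length ns) (length ns)" by (simp add: phi_def)
lemma blk_carrier: "blk ns A k k \<in> carrier_mat (ns!k) (ns!k)" by (simp add: blk_def)

lemma blk_sym: assumes "Bprime ns A" "k < length ns" "a < ns!k" "b < ns!k"
  shows "blk ns A k k $$ (a,b) = blk ns A k k $$ (b,a)"
  using assms by (simp add: blk_entry A_sym off_bound)

lemma QB: assumes "k < length ns"
  shows "(\<Sum>a<ns!k. \<Sum>b<ns!k. h a * Bk ns A k $$ (a,b) * h b) =
     (\<Sum>a<ns!k. \<Sum>b<ns!k. h a * A $$ (blk_off ns k + a, blk_off ns k + b) * h b)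
     - phi ns A $$ (k,k) * ((\<Sum>a<ns!k. h a) * (\<Sum>b<ns!k. h b))"
proof -
  have "(\<Sum>a<ns!k. \<Sum>b<ns!k. h a * Bk ns A k $$ (a,b) * h b) =
     (\<Sum>a<ns!k. \<Sum>b<ns!k. h a * A $$ (blk_off ns k + a, blk_off ns k + b) * h b - phi ns A $$ (k,k) * (h a * h b))"
    using assms by (intro sum.cong refl) (simp add: Bk_entry algebra_simps)
  also have "\<dots> = (\<Sum>a<ns!k. \<Sum>b<ns!k. h a * A $$ (blk_off ns k + a, blk_off ns k + b) * h b)
     - phi ns A $$ (k,k) * ((\<Sum>a<ns!k. h a) * (\<Sum>b<ns!k. h b))"
    by (simp only: sum_subtractf sum_product) (simp only: sum_distrib_left)
  finally show ?thesis .
qed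

lemma Qblk: "(\<Sum>a<ns!k. \<Sum>b<ns!k. h a * blk ns A k k $$ (a,b) * h b) =
     (\<Sum>a<ns!k. \<Sum>b<ns!k. h a * A $$ (blk_off ns k + a, blk_off ns k + b) * h b)"
  by (intro sum.cong refl) (simp add: blk_entry)

lemma sumB_zero: assumes "k < length ns" "ns!k \<ge> 1"
  shows "(\<Sum>a<ns!k. \<Sum>b<ns!k. c * Bk ns A k $$ (a,b) * c) = 0"
proof -
  have "(\<Sum>a<ns!k. \<Sum>b<ns!k. c * Bk ns A k $$ (a,b) * c) =
    (\<Sum>a<ns!k. \<Sum>b<ns!k. c * A $$ (blk_off ns k + a, blk_off ns k + b) * c) - phi ns A $$ (k,k) * (real (ns!k) * c * (real (ns!k) * c))"
    using QB[OF assms(1), of "\<lambda>_. c" A] by simp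
  also have "phi ns A $$ (k,k) * (real (ns!k) * c * (real (ns!k) * c)) = c * c * (\<Sum>a<ns!k. \<Sum>b<ns!k. A $$ (blk_off ns k + a, blk_off ns k + b))"
    using assms by (simp add: phi_entry)
  finally show ?thesis by (simp add: sum_distrib_left algebra_simps)
qed

definition mkw :: "nat list \<Rightarrow> (nat \<Rightarrow> nat \<Rightarrow> real) \<Rightarrow> nat \<Rightarrow> real" where
  "mkw ns G i = (\<Sum>k<length ns. \<Sum>a<ns!k. if i = blk_off ns k + a then G k a else 0)"

lemma mkw_at: assumes "k < length ns" "a < ns!k" shows "mkw ns G (blk_off ns k + a) = G k a"
proof -
  have "mkw ns G (blk_off ns k + a) = (\<Sum>l<length ns. \<Sum>b<ns!l. if k = l then (if b = a then G l b else 0) else 0)"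
    unfolding mkw_def
  proof (rule sum.cong[OF refl], rule sum.cong[OF refl])
    fix l b assume "l \<in> {..<length ns}" "b \<in> {..<ns!l}"
    then show "(if blk_off ns k + a = blk_off ns l + b then G l b else 0) = (if k = l then (if b = a then G l b else 0) else 0)"
      using off_inj[OF assms(1) _ assms(2), of l b] by auto
  qed
  also have "\<dots> = G k a" using assms by (simp add: delta2)
  finally show ?thesis .
qed

lemma sum_single: "k < (p::nat) \<Longrightarrow> (\<And>j. j < p \<Longrightarrow> j \<noteq> k \<Longrightarrow> F j = 0) \<Longrightarrow> (\<Sum>j<p. F j) = (F k :: real)"
proof -
  assume a: "k < p" "\<And>j. j < p \<Longrightarrow> j \<noteq> k \<Longrightarrow> F j = 0"
  have "(\<Sum>j<p. F j) = F k + (\<Sum>j\<in>{..<p}-{k}. F j)" using a(1) by (simp add: sum.remove)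
  also have "(\<Sum>j\<in>{..<p}-{k}. F j) = 0" using a(2) by (intro sum.neutral) auto
  finally show ?thesis by simp
qed

lemma surj_blk: assumes "i0 < sum_list ns" "w i0 \<noteq> (0::real)"
  shows "\<exists>k a. k < length ns \<and> a < ns!k \<and> w (blk_off ns k + a) \<noteq> 0"
proof (rule ccontr)
  assume "\<not> ?thesis"
  then have "(\<Sum>k<length ns. \<Sum>a<ns!k. (w (blk_off ns k + a))^2) = 0" by auto
  moreover have "(\<Sum>i<sum_list ns. (w i)^2) > 0" using assms by (intro sum_pos2[of _ i0]) auto
  ultimately show False by (simp add: reindex[where ns=ns and f="\<lambda>i. (w i)^2"])
qed


lemma A_carrier: "Bprime ns A \<Longrightarrow> A \<in> carrier_mat (sum_list ns) (sum_list ns)" by (simp add: Bprime_def)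

lemma Bk_psd: "Bprime ns A \<Longrightarrow> k < length ns \<Longrightarrow> psd (Bk ns A k)" by (simp add: Bprime_def Bk_def)

lemma dir_phi:
  assumes B: "Bprime ns A" and pos: "\<forall>k < length ns. ns ! k \<ge> 1"
  shows "(\<And>w. (\<Sum>i<sum_list ns. \<Sum>j<sum_list ns. w i * A$$(i,j) * w j) \<ge> 0) \<Longrightarrow> psd (phi ns A)"
    and "(\<And>w z. z < sum_list ns \<Longrightarrow> w z \<noteq> 0 \<Longrightarrow> (\<Sum>i<sum_list ns. \<Sum>j<sum_list ns. w i * A$$(i,j) * w j) > 0) \<Longrightarrow> pd (phi ns A)"
proof -
  have key: "(\<Sum>i<sum_list ns. \<Sum>j<sum_list ns. mkw ns (\<lambda>k a. h k / real (ns!k)) i * A$$(i,j) * mkw ns (\<lambda>k a. h k / real (ns!k)) j)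
     = (\<Sum>k<length ns. \<Sum>l<length ns. h k * phi ns A $$ (k,l) * h l)" for h
  proof -
    let ?w = "mkw ns (\<lambda>k a. h k / real (ns!k))"
    have s: "(\<Sum>a<ns!k. ?w (blk_off ns k + a)) = h k" if "k < length ns" for k
    proof -
      have "(\<Sum>a<ns!k. ?w (blk_off ns k + a)) = (\<Sum>a<ns!k. h k / real (ns!k))"
        using that by (intro sum.cong refl) (simp add: mkw_at)
      moreover have "ns!k \<noteq> 0" using pos that by fastforce
      ultimately show ?thesis by simp
    qed
    have q: "(\<Sum>a<ns!k. \<Sum>b<ns!k. ?w (blk_off ns k + a) * Bk ns A k $$ (a,b) * ?w (blk_off ns k + b)) = 0"
      if "k < length ns" for k
    proof -
      have "(\<Sum>a<ns!k. \<Sum>b<ns!k. ?w (blk_off ns k + a) * Bk ns A k $$ (a,b) * ?w (blk_off ns k + b))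
        = (\<Sum>a<ns!k. \<Sum>b<ns!k. (h k / real (ns!k)) * Bk ns A k $$ (a,b) * (h k / real (ns!k)))"
        using that by (intro sum.cong refl) (simp add: mkw_at)
      also have "\<dots> = 0" using sumB_zero that pos by blast
      finally show ?thesis .
    qed
    have P: "(\<Sum>k<length ns. \<Sum>l<length ns. (\<Sum>a<ns!k. ?w (blk_off ns k + a)) * phi ns A $$ (k,l) * (\<Sum>b<ns!l. ?w (blk_off ns l + b)))
       = (\<Sum>k<length ns. \<Sum>l<length ns. h k * phi ns A $$ (k,l) * h l)"
      by (rule sum.cong[OF refl], rule sum.cong[OF refl]) (simp add: s)
    have Q: "(\<Sum>k<length ns. \<Sum>a<ns!k. \<Sum>b<ns!k. ?w (blk_off ns k + a) * Bk ns A k $$ (a,b) * ?w (blk_off ns k + b)) = 0"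
      by (rule sum.neutral, rule ballI) (simp add: q)
    show ?thesis unfolding Qid[OF B pos] P Q by simp
  qed
  show "psd (phi ns A)" if h: "\<And>w. (\<Sum>i<sum_list ns. \<Sum>j<sum_list ns. w i * A$$(i,j) * w j) \<ge> 0"
  proof (rule psd_intro[OF phi_carrier])
    show "\<And>i j. i < length ns \<Longrightarrow> j < length ns \<Longrightarrow> phi ns A $$ (i, j) = phi ns A $$ (j, i)" using phi_sym[OF B] by blast
    fix g :: "nat \<Rightarrow> real" show "(\<Sum>i<length ns. \<Sum>j<length ns. g i * phi ns A $$ (i, j) * g j) \<ge> 0"
      using h[of "mkw ns (\<lambda>k a. g k / real (ns!k))"] unfolding key .
  qed
  show "pd (phi ns A)" if h: "\<And>w z. z < sum_list ns \<Longrightarrow> w z \<noteq> 0 \<Longrightarrow> (\<Sum>i<sum_list ns. \<Sum>j<sum_list ns. w i * A$$(i,j) * w j) > 0"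
  proof (rule pd_intro[OF phi_carrier])
    show "\<And>i j. i < length ns \<Longrightarrow> j < length ns \<Longrightarrow> phi ns A $$ (i, j) = phi ns A $$ (j, i)" using phi_sym[OF B] by blast
    fix g :: "nat \<Rightarrow> real" and k0 assume k0: "k0 < length ns" "g k0 \<noteq> 0"
    have "ns!k0 \<ge> 1" using pos k0 by auto
    then have ne: "mkw ns (\<lambda>k a. g k / real (ns!k)) (blk_off ns k0 + 0) \<noteq> 0" using k0 by (subst mkw_at) auto
    have bd: "blk_off ns k0 + 0 < sum_list ns" using off_bound[of k0 ns 0] k0 \<open>ns!k0 \<ge> 1\<close> by simp
    show "(\<Sum>i<length ns. \<Sum>j<length ns. g i * phi ns A $$ (i, j) * g j) > 0"
      using h[where z="blk_off ns k0 + 0" and w="mkw ns (\<lambda>k a. g k / real (ns!k))", OF bd ne] unfolding key .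
  qed
qed


lemma dir_blk:
  assumes B: "Bprime ns A" and pos: "\<forall>k < length ns. ns ! k \<ge> 1" and k: "k < length ns"
  shows "(\<And>w. (\<Sum>i<sum_list ns. \<Sum>j<sum_list ns. w i * A$$(i,j) * w j) \<ge> 0) \<Longrightarrow> psd (blk ns A k k)"
    and "(\<And>w z. z < sum_list ns \<Longrightarrow> w z \<noteq> 0 \<Longrightarrow> (\<Sum>i<sum_list ns. \<Sum>j<sum_list ns. w i * A$$(i,j) * w j) > 0) \<Longrightarrow> pd (blk ns A k k)"
proof -
  have key: "(\<Sum>i<sum_list ns. \<Sum>j<sum_list ns. mkw ns (\<lambda>k' a. if k' = k then h a else 0) i * A$$(i,j) * mkw ns (\<lambda>k' a. if k' = k then h a else 0) j)
     = (\<Sum>a<ns!k. \<Sum>b<ns!k. h a * blk ns A k k $$ (a,b) * h b)" for h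
  proof -
    let ?w = "mkw ns (\<lambda>k' a. if k' = k then h a else 0)"
    let ?s = "\<lambda>k'. (\<Sum>a<ns!k'. ?w (blk_off ns k' + a))"
    have s: "?s k' = (if k' = k then (\<Sum>a<ns!k. h a) else 0)" if "k' < length ns" for k'
    proof -
      have "?s k' = (\<Sum>a<ns!k'. if k' = k then h a else 0)"
        using that by (intro sum.cong refl) (simp add: mkw_at)
      then show ?thesis by simp
    qed
    have P: "(\<Sum>k'<length ns. \<Sum>l<length ns. ?s k' * phi ns A $$ (k',l) * ?s l) = ?s k * phi ns A $$ (k,k) * ?s k"
    proof -
      have "(\<Sum>k'<length ns. \<Sum>l<length ns. ?s k' * phi ns A $$ (k',l) * ?s l) = (\<Sum>l<length ns. ?s k * phi ns A $$ (k,l) * ?s l)"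
        by (rule sum_single[OF k]) (simp add: s)
      also have "\<dots> = ?s k * phi ns A $$ (k,k) * ?s k"
        by (rule sum_single[OF k]) (simp add: s)
      finally show ?thesis .
    qed
    have Q: "(\<Sum>k'<length ns. \<Sum>a<ns!k'. \<Sum>b<ns!k'. ?w (blk_off ns k' + a) * Bk ns A k' $$ (a,b) * ?w (blk_off ns k' + b))
       = (\<Sum>a<ns!k. \<Sum>b<ns!k. h a * Bk ns A k $$ (a,b) * h b)"
    proof -
      have "(\<Sum>k'<length ns. \<Sum>a<ns!k'. \<Sum>b<ns!k'. ?w (blk_off ns k' + a) * Bk ns A k' $$ (a,b) * ?w (blk_off ns k' + b))
        = (\<Sum>a<ns!k. \<Sum>b<ns!k. ?w (blk_off ns k + a) * Bk ns A k $$ (a,b) * ?w (blk_off ns k + b))"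
        by (rule sum_single[OF k]) (simp add: mkw_at)
      also have "\<dots> = (\<Sum>a<ns!k. \<Sum>b<ns!k. h a * Bk ns A k $$ (a,b) * h b)"
        using k by (intro sum.cong refl) (simp add: mkw_at)
      finally show ?thesis .
    qed
    have sk: "?s k = (\<Sum>a<ns!k. h a)" using s k by simp
    show ?thesis unfolding Qid[OF B pos] P Q QB[OF k] Qblk sk by simp
  qed
  have sym: "\<And>i j. i < ns!k \<Longrightarrow> j < ns!k \<Longrightarrow> blk ns A k k $$ (i, j) = blk ns A k k $$ (j, i)"
    using blk_sym[OF B k] by blast
  show "psd (blk ns A k k)" if h: "\<And>w. (\<Sum>i<sum_list ns. \<Sum>j<sum_list ns. w i * A$$(i,j) * w j) \<ge> 0"
  proof (rule psd_intro[OF blk_carrier sym])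
    fix g :: "nat \<Rightarrow> real" show "(\<Sum>i<ns!k. \<Sum>j<ns!k. g i * blk ns A k k $$ (i, j) * g j) \<ge> 0"
      using h[of "mkw ns (\<lambda>k' a. if k' = k then g a else 0)"] unfolding key .
  qed
  show "pd (blk ns A k k)" if h: "\<And>w z. z < sum_list ns \<Longrightarrow> w z \<noteq> 0 \<Longrightarrow> (\<Sum>i<sum_list ns. \<Sum>j<sum_list ns. w i * A$$(i,j) * w j) > 0"
  proof (rule pd_intro[OF blk_carrier sym])
    fix g :: "nat \<Rightarrow> real" and a0 assume a0: "a0 < ns!k" "g a0 \<noteq> 0"
    then have ne: "mkw ns (\<lambda>k' a. if k' = k then g a else 0) (blk_off ns k + a0) \<noteq> 0" using k by (subst mkw_at) auto
    have bd: "blk_off ns k + a0 < sum_list ns" using off_bound k a0 by simp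
    show "(\<Sum>i<ns!k. \<Sum>j<ns!k. g i * blk ns A k k $$ (i, j) * g j) > 0"
      using h[where z="blk_off ns k + a0" and w="mkw ns (\<lambda>k' a. if k' = k then g a else 0)", OF bd ne] unfolding key .
  qed
qed


lemma pd_imp_psd: "pd M \<Longrightarrow> psd M"
proof -
  assume p: "pd M"
  have pos: "\<forall>v \<in> carrier_vec (dim_row M). v \<noteq> 0\<^sub>v (dim_row M) \<longrightarrow> v \<bullet> (M *\<^sub>v v) > 0"
    using p unfolding pd_def by blast
  have "v \<bullet> (M *\<^sub>v v) \<ge> 0" if v: "v \<in> carrier_vec (dim_row M)" for v
  proof (cases "v = 0\<^sub>v (dim_row M)")
    case True
    have sq: "M \<in> carrier_mat (dim_row M) (dim_row M)" using p unfolding pd_def by blast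
    have "M *\<^sub>v v \<in> carrier_vec (dim_row M)" by (rule mult_mat_vec_carrier[OF sq v])
    then have "0\<^sub>v (dim_row M) \<bullet> (M *\<^sub>v v) = 0" by (rule scalar_prod_left_zero)
    then show ?thesis using True by simp
  next
    case False then show ?thesis using pos v less_imp_le by blast
  qed
  then show ?thesis using p unfolding pd_def psd_def by blast
qed

lemma conv_psd:
  assumes B: "Bprime ns A" and pos: "\<forall>k < length ns. ns ! k \<ge> 1" and P: "psd (phi ns A)"
  shows "psd A"
proof (rule psd_intro[OF A_carrier[OF B]])
  show "\<And>i j. i < sum_list ns \<Longrightarrow> j < sum_list ns \<Longrightarrow> A $$ (i, j) = A $$ (j, i)" using A_sym[OF B] by blast
  fix w :: "nat \<Rightarrow> real"
  let ?s = "\<lambda>k. (\<Sum>a<ns!k. w (blk_off ns k + a))"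
  let ?Qk = "\<lambda>k. (\<Sum>a<ns!k. \<Sum>b<ns!k. w (blk_off ns k + a) * Bk ns A k $$ (a,b) * w (blk_off ns k + b))"
  have dp: "dim_row (phi ns A) = length ns" by (simp add: phi_def)
  have "(\<Sum>k<length ns. \<Sum>l<length ns. ?s k * phi ns A $$ (k,l) * ?s l) \<ge> 0"
    by (rule psd_quad[OF P dp])
  moreover have Qnn: "?Qk k \<ge> 0" if "k < length ns" for k
    by (rule psd_quad[OF Bk_psd[OF B that] Bk_dim(1)])
  have "(\<Sum>k<length ns. ?Qk k) \<ge> 0" by (rule sum_nonneg) (use Qnn in auto)
  ultimately show "(\<Sum>i<sum_list ns. \<Sum>j<sum_list ns. w i * A $$ (i, j) * w j) \<ge> 0"
    using Qid[OF B pos, of w] by linarith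
qed

lemma conv_pd:
  assumes B: "Bprime ns A" and pos: "\<forall>k < length ns. ns ! k \<ge> 1" and P: "pd (phi ns A)"
    and D: "\<forall>k < length ns. pd (blk ns A k k)"
  shows "pd A"
proof (rule pd_intro[OF A_carrier[OF B]])
  show "\<And>i j. i < sum_list ns \<Longrightarrow> j < sum_list ns \<Longrightarrow> A $$ (i, j) = A $$ (j, i)" using A_sym[OF B] by blast
  fix w :: "nat \<Rightarrow> real" and i0 assume i0: "i0 < sum_list ns" "w i0 \<noteq> 0"
  obtain k0 a0 where ka: "k0 < length ns" "a0 < ns!k0" "w (blk_off ns k0 + a0) \<noteq> 0" using surj_blk[of i0 ns w, OF i0] by blast
  let ?s = "\<lambda>k. (\<Sum>a<ns!k. w (blk_off ns k + a))"
  let ?P = "(\<Sum>k<length ns. \<Sum>l<length ns. ?s k * phi ns A $$ (k,l) * ?s l)"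
  let ?Qk = "\<lambda>k. (\<Sum>a<ns!k. \<Sum>b<ns!k. w (blk_off ns k + a) * Bk ns A k $$ (a,b) * w (blk_off ns k + b))"
  have dp: "dim_row (phi ns A) = length ns" by (simp add: phi_def)
  have Qnn: "?Qk k \<ge> 0" if "k < length ns" for k
    by (rule psd_quad[OF Bk_psd[OF B that] Bk_dim(1)])
  have Qs: "(\<Sum>k<length ns. ?Qk k) \<ge> 0" by (rule sum_nonneg) (use Qnn in auto)
  have Pnn: "?P \<ge> 0" by (rule psd_quad[OF pd_imp_psd[OF P] dp])
  have id: "(\<Sum>i<sum_list ns. \<Sum>j<sum_list ns. w i * A $$ (i, j) * w j) = ?P + (\<Sum>k<length ns. ?Qk k)"
    by (rule Qid[OF B pos])
  show "(\<Sum>i<sum_list ns. \<Sum>j<sum_list ns. w i * A $$ (i, j) * w j) > 0"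
  proof (cases "\<exists>k < length ns. ?s k \<noteq> 0")
    case True
    then obtain k where k: "k < length ns" "?s k \<noteq> 0" by blast
    have "?P > 0" by (rule pd_quad[where h="?s", OF P dp k])
    then show ?thesis using id Qs by linarith
  next
    case False
    then have z: "?s k = 0" if "k < length ns" for k using that by blast
    have "?P = 0" by (rule sum.neutral, rule ballI, rule sum.neutral, rule ballI) (simp add: z)
    moreover have "?Qk k0 > 0"
    proof -
      have "?Qk k0 = (\<Sum>a<ns!k0. \<Sum>b<ns!k0. w (blk_off ns k0 + a) * A $$ (blk_off ns k0 + a, blk_off ns k0 + b) * w (blk_off ns k0 + b))
         - phi ns A $$ (k0,k0) * (?s k0 * ?s k0)"
        by (rule QB[OF ka(1)])
      also have "\<dots> = (\<Sum>a<ns!k0. \<Sum>b<ns!k0. w (blk_off ns k0 + a) * blk ns A k0 k0 $$ (a,b) * w (blk_off ns k0 + b))"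
        by (simp only: z[OF ka(1)] Qblk mult_zero_left mult_zero_right diff_zero)
      also have "\<dots> > 0"
        by (rule pd_quad[of "blk ns A k0 k0" "ns!k0" a0]) (use D ka in \<open>auto simp: blk_def\<close>)
      finally show ?thesis .
    qed
    then have "(\<Sum>k<length ns. ?Qk k) > 0" using Qnn ka(1) by (intro sum_pos2[where i=k0 and f="?Qk"]) auto
    ultimately show ?thesis using id by linarith
  qed
qed

theorem theorem1:
  fixes ns :: "nat list" and A :: "real mat"
  assumes "length ns \<ge> 1"
    and "\<forall>k < length ns. ns ! k \<ge> 1"
    and "Bprime ns A"
  shows "(psd A \<longleftrightarrow> psd (phi ns A) \<and> (\<forall>k < length ns. psd (blk ns A k k)))
       \<and> (pd A \<longleftrightarrow> pd (phi ns A) \<and> (\<forall>k < length ns. pd (blk ns A k k)))"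
proof -
  note B = assms(3) and pos = assms(2)
  have Ad: "dim_row A = sum_list ns" using A_carrier[OF B] by auto
  have q1: "psd A \<Longrightarrow> (\<Sum>i<sum_list ns. \<Sum>j<sum_list ns. w i * A$$(i,j) * w j) \<ge> 0" for w
    using psd_quad Ad by blast
  have q2: "pd A \<Longrightarrow> i0 < sum_list ns \<Longrightarrow> w i0 \<noteq> 0 \<Longrightarrow> (\<Sum>i<sum_list ns. \<Sum>j<sum_list ns. w i * A$$(i,j) * w j) > 0" for w i0
    using pd_quad Ad by blast
  have a1: "psd A \<Longrightarrow> psd (phi ns A)" using dir_phi(1)[OF B pos] q1 by blast
  have a2: "psd A \<Longrightarrow> k < length ns \<Longrightarrow> psd (blk ns A k k)" for k using dir_blk(1)[OF B pos] q1 by blast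
  have a3: "pd A \<Longrightarrow> pd (phi ns A)" using dir_phi(2)[OF B pos] q2 by blast
  have a4: "pd A \<Longrightarrow> k < length ns \<Longrightarrow> pd (blk ns A k k)" for k using dir_blk(2)[OF B pos] q2 by blast
  show ?thesis using a1 a2 a3 a4 conv_psd[OF B pos] conv_pd[OF B pos] by blast
qed

end
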